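(* Let $0<p<1$. Then $$w_n^{\lfloor np-\epsilon(n)\rfloor}(p)\geq\frac{1}{p}-n^{-\Theta(\log n)}\qquad\text{and}\qquad w_n^{\lfloor np+\epsilon(n)\rfloor}(p)\leq n^{-\Theta(\log n)},$$ i.e. there exist functions $f,g:\mathbb{N}\to\mathbb{R}^+_0$ with $f(n)=\Theta(\log n)$ and $g(n)=\Theta(\log n)$ such that $w_n^{\lfloor np-\epsilon(n)\rfloor}(p)\geq\frac1p-n^{-f(n)}$ and $w_n^{\lfloor np+\epsilon(n)\rfloor}(p)\leq n^{-g(n)}$ for all sufficiently large $n$.
   Context: For $0<p<1$, $n\in\mathbb{N}$ and $0\le i\le n$, $w_n^i(p)=\sum_{j=i}^n\binom{j}{i}p^i(1-p)^{j-i}$. Define $\epsilon:\mathbb{N}\to\mathbb{R}^+$ by $\epsilon(n)=\sqrt{n}\log n$ for $n\geq2$ and $\epsilon(n)=1$ otherwise. For $f,g:\mathbb{N}\to\mathbb{R}^+_0$, $f(n)=\Theta(g(n))$ means there are $C_1,C_2>0$ with $C_1g(n)\le f(n)\le C_2 g(n)$ for all sufficiently large $n$. *)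

theory Defs
  imports Complex_Main
begin

definition w :: "nat \<Rightarrow> nat \<Rightarrow> real \<Rightarrow> real" where
  "w n i p = (\<Sum>j=i..n. real (j choose i) * p ^ i * (1 - p) ^ (j - i))"

definition eps :: "nat \<Rightarrow> real" where
  "eps n = (if n \<ge> 2 then sqrt (real n) * ln (real n) else 1)"

definition bigTheta_nat :: "(nat \<Rightarrow> real) \<Rightarrow> (nat \<Rightarrow> real) \<Rightarrow> bool" where
  "bigTheta_nat f g \<longleftrightarrow> (\<exists>C1 C2. C1 > 0 \<and> C2 > 0 \<and>
     (\<forall>\<^sub>F n in sequentially. C1 * g n \<le> f n \<and> f n \<le> C2 * g n))"

end

theory Submission imports Defs "HOL-Probability.Hoeffding" "HOL-Real_Asymp.Real_Asymp" begin

lemma w_prob: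
  assumes p: "0 < p" "p < 1" and i: "i \<le> n"
  shows "p * w n i p = measure_pmf.prob (binomial_pmf (n+1) (1-p)) {..n-i}"
proof -
  define g where "g = (\<lambda>j. real (j choose i) * p ^ i * (1 - p) ^ (j - i))"
  have "w n i p = (\<Sum>j=0+i..(n-i)+i. g j)"
    unfolding w_def g_def using i by simp
  also have "\<dots> = (\<Sum>m=0..n-i. g (m+i))"
    by (rule sum.shift_bounds_cl_nat_ivl)
  also have "\<dots> = (\<Sum>m=0..n-i. real (m+i choose i) * p^i * (1-p)^m)"
    unfolding g_def by simp
  finally have "w n i p = (\<Sum>m=0..n-i. real (m+i choose i) * p^i * (1-p)^m)" .
  also have "\<dots> = (\<Sum>m\<le>n-i. real (m+i choose i) * p^i * (1-p)^m)"
    by (simp add: atLeast0AtMost)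
  finally have eq: "w n i p = (\<Sum>m\<le>n-i. real (m+i choose i) * p^i * (1-p)^m)" .
  have "p * w n i p = (\<Sum>m\<le>n-i. pmf (neg_binomial_pmf (i+1) p) m)"
    unfolding eq sum_distrib_left using p
    by (intro sum.cong refl) (simp add: pmf_neg_binomial binomial_symmetric[of i] algebra_simps)
  also have "\<dots> = measure_pmf.prob (neg_binomial_pmf (i+1) p) {..n-i}"
    by (intro measure_measure_pmf_finite [symmetric]) auto
  also have "\<dots> = measure_pmf.prob (binomial_pmf (n+1) (1-p)) {..n-i}"
    using prob_neg_binomial_pmf_atMost[of p "i+1" "n-i"] p i by simp
  finally show ?thesis .
qed

lemma E: fixes p :: real assumes "p > 0" shows
 "eventually (\<lambda>(n::nat). (1/p) * exp (- (ln (real n) ^ 2) / 2) \<le> exp (- (ln (real n) ^ 2) / 4)) sequentially"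
 "eventually (\<lambda>(n::nat). real n * p \<ge> sqrt (real n) * ln (real n)) sequentially"
 "eventually (\<lambda>(n::nat). sqrt (real n) * ln (real n) \<ge> 4) sequentially"
  using assms by real_asymp+


lemma lower_pt:
  fixes p :: real and n :: nat
  assumes p: "0 < p" "p < 1" and n: "n \<ge> 3"
    and H1: "(1/p) * exp (- (ln (real n) ^ 2) / 2) \<le> exp (- (ln (real n) ^ 2) / 4)"
    and H2: "real n * p \<ge> sqrt (real n) * ln (real n)"
  shows "w n (nat \<lfloor>real n * p - eps n\<rfloor>) p \<ge> 1 / p - real n powr (- (ln (real n) / 4))"
proof -
  define L where "L = ln (real n)"
  define e where "e = eps n"
  define i where "i = nat \<lfloor>real n * p - eps n\<rfloor>"
  have e: "e = sqrt (real n) * L" using n by (simp add: e_def eps_def L_def)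
  have L0: "L \<ge> 0" using n by (simp add: L_def)
  have e0: "e \<ge> 0" using L0 e by simp
  have e2: "e^2 = real n * L^2" using e by (simp add: power_mult_distrib)
  have x0: "0 \<le> real n * p - e" using H2 e by (simp add: L_def)
  hence "\<lfloor>real n * p - e\<rfloor> \<ge> 0" by simp
  hence "real i = of_int \<lfloor>real n * p - e\<rfloor>" unfolding i_def e_def by simp
  hence ile: "real i \<le> real n * p - e" by linarith
  have "real n * p \<le> real n" using p by (simp add: mult_left_le)
  hence iln: "i \<le> n" using ile e0 by linarith
  define q where "q = 1 - p"
  define E where "E = real (n+1) * p - real i"
  have Ege: "E \<ge> e" using ile p unfolding E_def by (simp add: algebra_simps)
  have "p * w n i p = measure_pmf.prob (binomial_pmf (n+1) q) {..n-i}"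
    using w_prob[OF p iln] by (simp add: q_def)
  hence "1/p - w n i p = (1 - measure_pmf.prob (binomial_pmf (n+1) q) {..n-i}) / p"
    using p by (simp add: field_simps)
  also have "1 - measure_pmf.prob (binomial_pmf (n+1) q) {..n-i} =
       measure_pmf.prob (binomial_pmf (n+1) q) (UNIV - {..n-i})"
    using measure_pmf.prob_compl[of "{..n-i}" "binomial_pmf (n+1) q"] by simp
  also have "\<dots> \<le> measure_pmf.prob (binomial_pmf (n+1) q) {x. real x \<ge> real (n+1) * q + E}"
  proof (rule measure_pmf.finite_measure_mono)
    show "UNIV - {..n - i} \<subseteq> {x. real (n + 1) * q + E \<le> real x}"
    proof
      fix x assume "x \<in> UNIV - {..n-i}"
      hence "x \<ge> n - i + 1" by auto
      hence "real x \<ge> real n - real i + 1" using iln by linarith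
      thus "x \<in> {x. real (n + 1) * q + E \<le> real x}" unfolding E_def q_def by (simp add: algebra_simps)
    qed
  qed auto
  also have "\<dots> \<le> exp (-2 * E^2 / real (n+1))"
    by (rule binomial_distribution.prob_ge) (use p e0 Ege in \<open>auto simp: binomial_distribution_def q_def\<close>)
  also have "\<dots> \<le> exp (- (L^2) / 2)"
  proof -
    have "e^2 \<le> E^2" using Ege e0 by (intro power_mono) auto
    hence "2 * (real n * L^2) \<le> 2 * E^2" using e2 by simp
    moreover have "(real (n+1)) * (L^2/2) \<le> 2 * (real n * L^2)"
    proof -
      have "1 * (L^2) \<le> real n * L^2" using n by (intro mult_right_mono) auto
      moreover have "L^2 \<ge> 0" by simp
      moreover have "real n * L^2 \<ge> 0" by simp
      moreover have "real (n+1) * (L^2/2) = (real n * L^2)/2 + L^2/2" by (simp add: algebra_simps)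
      ultimately show ?thesis by linarith
    qed
    ultimately have "L^2/2 \<le> 2 * E^2 / real (n+1)" by (simp add: field_simps)
    thus ?thesis by simp
  qed
  finally have "1/p - w n i p \<le> exp (- (L^2) / 2) / p" using p by (simp add: divide_right_mono)
  also have "\<dots> \<le> exp (- (L^2) / 4)" using H1 by (simp add: L_def)
  also have "exp (- (L^2) / 4) = real n powr (- (L / 4))"
    using n by (simp add: powr_def L_def power2_eq_square)
  finally show ?thesis unfolding i_def L_def by simp
qed


lemma upper_pt:
  fixes p :: real and n :: nat
  assumes p: "0 < p" "p < 1" and n: "n \<ge> 3"
    and H1: "(1/p) * exp (- (ln (real n) ^ 2) / 2) \<le> exp (- (ln (real n) ^ 2) / 4)"
    and H3: "sqrt (real n) * ln (real n) \<ge> 4"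
  shows "w n (nat \<lfloor>real n * p + eps n\<rfloor>) p \<le> real n powr (- (ln (real n) / 4))"
proof -
  define L where "L = ln (real n)"
  define e where "e = eps n"
  define i where "i = nat \<lfloor>real n * p + eps n\<rfloor>"
  have e: "e = sqrt (real n) * L" using n by (simp add: e_def eps_def L_def)
  have L0: "L \<ge> 0" using n by (simp add: L_def)
  have e4: "e \<ge> 4" using H3 e by (simp add: L_def)
  have e2: "e^2 = real n * L^2" using e by (simp add: power_mult_distrib)
  have pw: "exp (- (L^2) / 4) = real n powr (- (L / 4))"
    using n by (simp add: powr_def L_def power2_eq_square)
  show ?thesis
  proof (cases "i \<le> n")
    case False
    hence "w n i p = 0" by (simp add: w_def)
    thus ?thesis unfolding i_def by simp
  next
    case iln: True
    have x0: "0 \<le> real n * p + e" using e4 p by simp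
    hence "\<lfloor>real n * p + e\<rfloor> \<ge> 0" by simp
    hence "real i = of_int \<lfloor>real n * p + e\<rfloor>" unfolding i_def e_def by simp
    hence ige: "real i + 1 > real n * p + e" by linarith
    define q where "q = 1 - p"
    define E where "E = real i + 1 - real (n+1) * p"
    have Ege: "E \<ge> 3 * e / 4" using ige p e4 unfolding E_def by (simp add: algebra_simps)
    have E0: "E \<ge> 0" using Ege e4 by simp
    have "p * w n i p = measure_pmf.prob (binomial_pmf (n+1) q) {..n-i}"
      using w_prob[OF p iln] by (simp add: q_def)
    also have "\<dots> \<le> measure_pmf.prob (binomial_pmf (n+1) q) {x. real x \<le> real (n+1) * q - E}"
    proof (rule measure_pmf.finite_measure_mono)
      show "{..n - i} \<subseteq> {x. real x \<le> real (n+1) * q - E}"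
      proof
        fix x assume "x \<in> {..n-i}"
        hence "x \<le> n - i" by auto
        hence "real x \<le> real n - real i" using iln by linarith
        thus "x \<in> {x. real x \<le> real (n+1) * q - E}" unfolding E_def q_def by (simp add: algebra_simps)
      qed
    qed auto
    also have "\<dots> \<le> exp (-2 * E^2 / real (n+1))"
      by (rule binomial_distribution.prob_le) (use p E0 in \<open>auto simp: binomial_distribution_def q_def\<close>)
    also have "\<dots> \<le> exp (- (L^2) / 2)"
    proof -
      have "(3*e/4)^2 \<le> E^2" using Ege e4 by (intro power_mono) auto
      hence "9 * (real n * L^2) \<le> 16 * E^2" using e2 by (simp add: power2_eq_square)
      moreover have "1 * (L^2) \<le> real n * L^2" using n by (intro mult_right_mono) auto
      moreover have "real (n+1) * (L^2/2) = (real n * L^2)/2 + L^2/2" by (simp add: algebra_simps)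
      moreover have "L^2 \<ge> 0" by simp
      ultimately have "(real (n+1)) * (L^2/2) \<le> 2 * E^2" by linarith
      hence "L^2/2 \<le> 2 * E^2 / real (n+1)" by (simp add: field_simps)
      thus ?thesis by simp
    qed
    finally have "w n i p \<le> exp (- (L^2) / 2) / p" using p by (simp add: field_simps)
    also have "\<dots> \<le> exp (- (L^2) / 4)" using H1 by (simp add: L_def)
    finally show ?thesis unfolding i_def L_def pw[unfolded L_def] by simp
  qed
qed


theorem corollary2:
  fixes p :: real
  assumes "0 < p" and "p < 1"
  shows "\<exists>f g :: nat \<Rightarrow> real. (\<forall>n. f n \<ge> 0) \<and> (\<forall>n. g n \<ge> 0) \<and>
    bigTheta_nat f (\<lambda>n. ln (real n)) \<and> bigTheta_nat g (\<lambda>n. ln (real n)) \<and>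
    (\<forall>\<^sub>F n in sequentially.
        w n (nat \<lfloor>real n * p - eps n\<rfloor>) p \<ge> 1 / p - real n powr (- f n) \<and>
        w n (nat \<lfloor>real n * p + eps n\<rfloor>) p \<le> real n powr (- g n))"
proof (intro exI[of _ "\<lambda>n. ln (real n) / 4"] conjI allI)
  fix n :: nat show "ln (real n) / 4 \<ge> 0" by (cases n) auto
next
  fix n :: nat show "ln (real n) / 4 \<ge> 0" by (cases n) auto
next
  show "bigTheta_nat (\<lambda>n. ln (real n) / 4) (\<lambda>n. ln (real n))"
    unfolding bigTheta_nat_def by (intro exI[of _ "1/4"] conjI) auto
  thus "bigTheta_nat (\<lambda>n. ln (real n) / 4) (\<lambda>n. ln (real n))" .
next
  have E1: "eventually (\<lambda>(n::nat). (1/p) * exp (- (ln (real n) ^ 2) / 2) \<le> exp (- (ln (real n) ^ 2) / 4)) sequentially"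
   and E2: "eventually (\<lambda>(n::nat). real n * p \<ge> sqrt (real n) * ln (real n)) sequentially"
   and E3: "eventually (\<lambda>(n::nat). sqrt (real n) * ln (real n) \<ge> 4) sequentially"
    using assms by real_asymp+
  show "\<forall>\<^sub>F n in sequentially.
        w n (nat \<lfloor>real n * p - eps n\<rfloor>) p \<ge> 1 / p - real n powr (- (ln (real n) / 4)) \<and>
        w n (nat \<lfloor>real n * p + eps n\<rfloor>) p \<le> real n powr (- (ln (real n) / 4))"
    using E1 E2 E3 eventually_ge_at_top[of "3::nat"]
  proof eventually_elim
    case (elim n)
    thus ?case using lower_pt[OF assms] upper_pt[OF assms] by blast
  qed
qed

end
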